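(* Let $(X,f)$ be a dynamical system. Suppose there are $\varepsilon>0$ and a dense Mycielski set $S\subset X$ such that (i) $S\times S\subset\mathrm{SProx}(f)$, and (ii) for every nonempty open $W\subset X$ there is a Cantor set $C\subset S\cap W$ which is syndetically $3\varepsilon$-scrambled for $f$. Then $f$ has a dense Mycielski syndetically $\varepsilon$-scrambled set $T$ with $T\subset S$.
   Context: Dynamical system: compact metric space $X$ with metric $d$ and continuous $f$. Syndetic: subset of $\mathbb N$ meeting every set with arbitrarily long runs of consecutive integers. $\mathrm{Asy}(f)=\{(x,y):d(f^nx,f^ny)\to0\}$, $\mathrm{SProx}(f)=\{(x,y):\{n:d(f^nx,f^ny)<\eta\}$ syndetic for all $\eta>0\}$. A set with at least two points is syndetically $\delta$-scrambled if every pair of distinct points $x,y$ in it lies in $\mathrm{SProx}(f)\setminus\mathrm{Asy}(f)$ and satisfies $\limsup_n d(f^nx,f^ny)\ge\delta$. Cantor set: nonempty compact perfect totally disconnected; Mycielski set: countable union of Cantor sets. *)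

theory Defs
  imports "HOL-Analysis.Analysis" "HOL-Library.Liminf_Limsup"
begin

definition thick :: "nat set \<Rightarrow> bool" where
  "thick B \<longleftrightarrow> (\<forall>L. \<exists>m. {m..<m+L} \<subseteq> B)"

definition syndetic :: "nat set \<Rightarrow> bool" where
  "syndetic A \<longleftrightarrow> (\<forall>B. thick B \<longrightarrow> A \<inter> B \<noteq> {})"

definition Asy :: "('a::metric_space \<Rightarrow> 'a) \<Rightarrow> ('a \<times> 'a) set" where
  "Asy f = {(x, y). (\<lambda>n. dist ((f ^^ n) x) ((f ^^ n) y)) \<longlonglongrightarrow> 0}"

definition SProx :: "('a::metric_space \<Rightarrow> 'a) \<Rightarrow> ('a \<times> 'a) set" where
  "SProx f = {(x, y). \<forall>\<eta>>0. syndetic {n. dist ((f ^^ n) x) ((f ^^ n) y) < \<eta>}}"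

definition syndetically_scrambled ::
    "('a::metric_space \<Rightarrow> 'a) \<Rightarrow> real \<Rightarrow> 'a set \<Rightarrow> bool" where
  "syndetically_scrambled f \<delta> A \<longleftrightarrow>
     (\<exists>x\<in>A. \<exists>y\<in>A. x \<noteq> y) \<and>
     (\<forall>x\<in>A. \<forall>y\<in>A. x \<noteq> y \<longrightarrow>
        (x, y) \<in> SProx f - Asy f \<and>
        ereal \<delta> \<le> limsup (\<lambda>n. ereal (dist ((f ^^ n) x) ((f ^^ n) y))))"

definition totally_disconnected :: "'a::topological_space set \<Rightarrow> bool" where
  "totally_disconnected C \<longleftrightarrow> (\<forall>T. T \<subseteq> C \<and> connected T \<longrightarrow> (\<exists>a. T \<subseteq> {a}))"

definition cantor_set :: "'a::metric_space set \<Rightarrow> bool" where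
  "cantor_set C \<longleftrightarrow> C \<noteq> {} \<and> compact C \<and> (\<forall>x\<in>C. x islimpt C) \<and> totally_disconnected C"

text \<open>Countable union of Cantor sets (indexed by nat; repetitions allow finite families).\<close>
definition mycielski :: "'a::metric_space set \<Rightarrow> bool" where
  "mycielski M \<longleftrightarrow> (\<exists>Cs :: nat \<Rightarrow> 'a set. (\<forall>n. cantor_set (Cs n)) \<and> M = (\<Union>n. Cs n))"

end

theory Submission imports Defs
begin

definition Qp :: "('a::metric_space \<Rightarrow> 'a) \<Rightarrow> real \<Rightarrow> nat \<Rightarrow> 'a \<Rightarrow> 'a \<Rightarrow> bool" where
  "Qp f e m x y \<longleftrightarrow> (\<exists>n\<ge>m. e < dist ((f^^n) x) ((f^^n) y))"

definition Lv :: "nat \<Rightarrow> (nat \<times> bool list) set" where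
  "Lv m = {(n,s). n \<le> m \<and> length s = m - n}"

lemma finite_Lv: "finite (Lv m)"
proof -
  have "Lv m \<subseteq> (\<Union>n\<le>m. (\<lambda>s. (n,s)) ` {s::bool list. length s = m-n})"
    unfolding Lv_def by auto
  moreover have "finite (\<Union>n\<le>m. (\<lambda>s. (n,s)) ` {s::bool list. length s = m-n})"
  proof (intro finite_UN_I finite_imageI)
    show "finite {s::bool list. length s = k}" for k
      using finite_lists_length_eq[of "UNIV::bool set" k] by simp
  qed auto
  ultimately show ?thesis by (rule finite_subset)
qed

lemma Qp_mono: "Qp f e m x y \<Longrightarrow> k \<le> m \<Longrightarrow> Qp f e k x y"
  unfolding Qp_def by (meson order_trans)

lemma nested_compact:
  fixes F :: "nat \<Rightarrow> 'a::metric_space set"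
  assumes "\<And>n. compact (F n)" "\<And>n. F n \<noteq> {}" "\<And>m n. m \<le> n \<Longrightarrow> F n \<subseteq> F m"
  shows "\<exists>z. \<forall>n. z \<in> F n"
proof -
  have "F 0 \<inter> (\<Inter>i\<in>UNIV. F i) \<noteq> {}"
  proof (rule compact_imp_fip_image[OF assms(1)])
    show "closed (F i)" for i using assms(1) compact_imp_closed by blast
    fix I' :: "nat set" assume "finite I'"
    have "F (Max (insert 0 I')) \<subseteq> F 0 \<inter> (\<Inter>i\<in>I'. F i)"
    proof -
      have "F (Max (insert 0 I')) \<subseteq> F i" if "i \<in> insert 0 I'" for i
        using assms(3) \<open>finite I'\<close> that by (meson Max_ge finite_insert)
      then show ?thesis by blast
    qed
    then show "F 0 \<inter> (\<Inter>i\<in>I'. F i) \<noteq> {}" using assms(2) by blast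
  qed
  then show ?thesis by blast
qed

lemma limsup_ge_of_frequent:
  fixes u :: "nat \<Rightarrow> real"
  assumes "\<And>k. \<exists>n\<ge>k. e < u n"
  shows "ereal e \<le> limsup (\<lambda>n. ereal (u n))"
proof (rule ccontr)
  assume "\<not> ?thesis"
  then have "limsup (\<lambda>n. ereal (u n)) < ereal e" by simp
  from Limsup_lessD[OF this] obtain N where "\<And>n. n \<ge> N \<Longrightarrow> ereal (u n) < ereal e"
    by (auto simp: eventually_sequentially)
  with assms[of N] show False by force
qed

lemma limsup_le_of_eventually:
  fixes u :: "nat \<Rightarrow> real"
  assumes "\<And>n. n \<ge> k \<Longrightarrow> u n \<le> e"
  shows "limsup (\<lambda>n. ereal (u n)) \<le> ereal e"
  by (rule Limsup_bounded) (use assms in \<open>auto simp: eventually_sequentially\<close>)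

definition cb :: "'a::metric_space \<times> real \<Rightarrow> 'a set" where
  "cb p = cball (fst p) (snd p)"

locale constr =
  fixes X :: "'a::metric_space set" and f :: "'a \<Rightarrow> 'a" and \<epsilon> :: real and C :: "nat \<Rightarrow> 'a set"
  assumes fX: "f ` X \<subseteq> X" and contf: "continuous_on X f" and eps: "\<epsilon> > 0"
    and CX: "\<And>n. C n \<subseteq> X" and Ccantor: "\<And>n. cantor_set (C n)"
    and Cscr: "\<And>n. syndetically_scrambled f (3*\<epsilon>) (C n)"
begin

lemma iter_X: "x \<in> X \<Longrightarrow> (f^^n) x \<in> X"
  by (induction n) (use fX in auto)

lemma cont_iter: "continuous_on X (f^^n)"
proof (induction n)
  case 0 then show ?case by (simp add: continuous_on_id)
next
  case (Suc n)
  have "continuous_on X (f \<circ> (f^^n))"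
    by (rule continuous_on_compose[OF Suc]) (rule continuous_on_subset[OF contf], use iter_X in auto)
  then show ?case by simp
qed

lemma C_limpt: "y \<in> C n \<Longrightarrow> y islimpt C n"
  using Ccantor[of n] unfolding cantor_set_def by blast

lemma at_most_one:
  assumes "y \<in> C j" "y' \<in> C j" "y \<noteq> y'"
    and "\<forall>n\<ge>k. dist ((f^^n) x) ((f^^n) y) \<le> \<epsilon>"
    and "\<forall>n\<ge>k. dist ((f^^n) x) ((f^^n) y') \<le> \<epsilon>"
  shows False
proof -
  have "ereal (3*\<epsilon>) \<le> limsup (\<lambda>n. ereal (dist ((f ^^ n) y) ((f ^^ n) y')))"
    using Cscr[of j] assms(1-3) unfolding syndetically_scrambled_def by blast
  moreover have "limsup (\<lambda>n. ereal (dist ((f ^^ n) y) ((f ^^ n) y'))) \<le> ereal (2*\<epsilon>)"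
  proof (rule limsup_le_of_eventually[of k])
    fix n assume "k \<le> n"
    then show "dist ((f ^^ n) y) ((f ^^ n) y') \<le> 2*\<epsilon>"
      using assms(4,5) dist_triangle[of "(f ^^ n) y" "(f ^^ n) y'" "(f^^n) x"]
    proof -
      have "dist ((f ^^ n) y) ((f ^^ n) y') \<le> dist ((f ^^ n) y) ((f ^^ n) x) + dist ((f ^^ n) x) ((f ^^ n) y')"
        by (rule dist_triangle)
      moreover have "dist ((f ^^ n) x) ((f ^^ n) y) \<le> \<epsilon>" "dist ((f ^^ n) x) ((f ^^ n) y') \<le> \<epsilon>"
        using assms(4,5) \<open>k \<le> n\<close> by auto
      ultimately show ?thesis by (simp add: dist_commute)
    qed
  qed
  ultimately have "ereal (3*\<epsilon>) \<le> ereal (2*\<epsilon>)" by (rule order_trans)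
  then have "3*\<epsilon> \<le> 2*\<epsilon>" by simp
  then show False using eps by simp
qed

lemma pair_fix:
  assumes x0: "x0 \<in> X" and y0: "y0 \<in> C j" and r: "r > 0" and s: "s > 0"
  shows "\<exists>y1 r1 s1. y1 \<in> C j \<and> 0 < r1 \<and> r1 \<le> r \<and> 0 < s1 \<and> s1 \<le> s \<and>
     cball y1 s1 \<subseteq> cball y0 s \<and>
     (\<forall>x\<in>X \<inter> cball x0 r1. \<forall>y\<in>X \<inter> cball y1 s1. Qp f \<epsilon> k x y)"
proof -
  obtain y' where y': "y' \<in> C j" "y' \<noteq> y0" "dist y' y0 < s/2"
    using C_limpt[OF y0] s unfolding islimpt_approachable by (meson half_gt_zero)
  obtain y1 n where y1: "y1 \<in> C j" "dist y1 y0 < s/2" and n: "n \<ge> k"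
     "\<epsilon> < dist ((f^^n) x0) ((f^^n) y1)"
  proof (cases "\<exists>n\<ge>k. \<epsilon> < dist ((f^^n) x0) ((f^^n) y0)")
    case True
    then obtain n where "n \<ge> k" "\<epsilon> < dist ((f^^n) x0) ((f^^n) y0)" by blast
    moreover have "dist y0 y0 < s/2" using s by simp
    ultimately show ?thesis using that y0 by blast
  next
    case False
    then have "\<forall>n\<ge>k. dist ((f^^n) x0) ((f^^n) y0) \<le> \<epsilon>" by (simp add: not_less)
    then have "\<not> (\<forall>n\<ge>k. dist ((f^^n) x0) ((f^^n) y') \<le> \<epsilon>)"
      using at_most_one[OF y0 y'(1) y'(2)[symmetric]] by blast
    then obtain n where "n \<ge> k" "\<epsilon> < dist ((f^^n) x0) ((f^^n) y')" by (auto simp: not_le)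
    then show ?thesis using that y' by blast
  qed
  define \<eta> where "\<eta> = dist ((f^^n) x0) ((f^^n) y1) - \<epsilon>"
  have eta: "\<eta> > 0" using n unfolding \<eta>_def by simp
  have y1X: "y1 \<in> X" using y1 CX by blast
  obtain d1 where d1: "d1 > 0" "\<And>x. x \<in> X \<Longrightarrow> dist x x0 < d1 \<Longrightarrow> dist ((f^^n) x) ((f^^n) x0) < \<eta>/2"
    using cont_iter[of n] x0 eta unfolding continuous_on_iff by (meson half_gt_zero)
  obtain d2 where d2: "d2 > 0" "\<And>x. x \<in> X \<Longrightarrow> dist x y1 < d2 \<Longrightarrow> dist ((f^^n) x) ((f^^n) y1) < \<eta>/2"
    using cont_iter[of n] y1X eta unfolding continuous_on_iff by (meson half_gt_zero)
  define r1 where "r1 = min r (d1/2)"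
  define s1 where "s1 = min (s/2) (d2/2)"
  have "cball y1 s1 \<subseteq> cball y0 s"
  proof
    fix z assume "z \<in> cball y1 s1"
    then have "dist y1 z \<le> s/2" unfolding s1_def by simp
    then show "z \<in> cball y0 s" using y1(2) dist_triangle[of y0 z y1]
      by (simp add: dist_commute)
  qed
  moreover have "Qp f \<epsilon> k x y" if "x \<in> X \<inter> cball x0 r1" "y \<in> X \<inter> cball y1 s1" for x y
  proof -
    have "dist x x0 < d1" using that d1 unfolding r1_def by (simp add: dist_commute)
    then have a: "dist ((f^^n) x) ((f^^n) x0) < \<eta>/2" using d1 that by blast
    have "dist y y1 < d2" using that d2 unfolding s1_def by (simp add: dist_commute)
    then have b: "dist ((f^^n) y) ((f^^n) y1) < \<eta>/2" using d2 that by blast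
    have "dist ((f^^n) x0) ((f^^n) y1) \<le> dist ((f^^n) x0) ((f^^n) x) + dist ((f^^n) x) ((f^^n) y) + dist ((f^^n) y) ((f^^n) y1)"
    proof -
      have "dist ((f^^n) x0) ((f^^n) y1) \<le> dist ((f^^n) x0) ((f^^n) x) + dist ((f^^n) x) ((f^^n) y1)"
        by (rule dist_triangle)
      moreover have "dist ((f^^n) x) ((f^^n) y1) \<le> dist ((f^^n) x) ((f^^n) y) + dist ((f^^n) y) ((f^^n) y1)"
        by (rule dist_triangle)
      ultimately show ?thesis by linarith
    qed
    then have "\<epsilon> < dist ((f^^n) x) ((f^^n) y)"
      using a b unfolding \<eta>_def by (simp add: dist_commute)
    then show ?thesis unfolding Qp_def using n by blast
  qed
  moreover have "0 < r1" "r1 \<le> r" "0 < s1" "s1 \<le> s"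
    using r s d1(1) d2(1) unfolding r1_def s1_def by auto
  ultimately show ?thesis using y1(1) by blast
qed


lemma multi_fix:
  assumes "finite PP" "PP \<subseteq> N \<times> N" "\<forall>(l,l')\<in>PP. fst l \<noteq> fst l'"
    and g: "\<forall>l\<in>N. fst (g l) \<in> C (fst l) \<and> snd (g l) > 0"
  shows "\<exists>g'. (\<forall>l\<in>N. fst (g' l) \<in> C (fst l) \<and> 0 < snd (g' l) \<and> snd (g' l) \<le> snd (g l) \<and> cb (g' l) \<subseteq> cb (g l))
     \<and> (\<forall>(l,l')\<in>PP. \<forall>x\<in>X \<inter> cb (g' l). \<forall>y\<in>X \<inter> cb (g' l'). Qp f \<epsilon> k x y)"
  using assms(1,2,3)
proof (induction PP rule: finite_induct)
  case empty
  show ?case using g by (intro exI[of _ g]) auto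
next
  case (insert p PP)
  obtain l l' where p: "p = (l,l')" by (cases p) blast
  have ll: "l \<in> N" "l' \<in> N" "fst l \<noteq> fst l'" using insert.prems p by auto
  then have "l \<noteq> l'" by auto
  from insert.IH insert.prems obtain g1 where
    g1: "\<forall>l\<in>N. fst (g1 l) \<in> C (fst l) \<and> 0 < snd (g1 l) \<and> snd (g1 l) \<le> snd (g l) \<and> cb (g1 l) \<subseteq> cb (g l)"
    and q1: "\<forall>(l,l')\<in>PP. \<forall>x\<in>X \<inter> cb (g1 l). \<forall>y\<in>X \<inter> cb (g1 l'). Qp f \<epsilon> k x y"
    by auto
  have x0: "fst (g1 l) \<in> X" using g1 ll CX by blast
  obtain y1 r1 s1 where pf: "y1 \<in> C (fst l')" "0 < r1" "r1 \<le> snd (g1 l)" "0 < s1" "s1 \<le> snd (g1 l')"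
     "cball y1 s1 \<subseteq> cball (fst (g1 l')) (snd (g1 l'))"
     "\<forall>x\<in>X \<inter> cball (fst (g1 l)) r1. \<forall>y\<in>X \<inter> cball y1 s1. Qp f \<epsilon> k x y"
    using pair_fix[OF x0, of "fst (g1 l')" "fst l'" "snd (g1 l)" "snd (g1 l')" k] g1 ll by blast
  define g2 where "g2 = g1(l := (fst (g1 l), r1), l' := (y1, s1))"
  have sub: "cb (g2 a) \<subseteq> cb (g1 a)" for a
  proof -
    have "cball (fst (g1 l)) r1 \<subseteq> cball (fst (g1 l)) (snd (g1 l))"
      using pf(3) by (rule subset_cball)
    then show ?thesis using pf(6) \<open>l \<noteq> l'\<close> unfolding g2_def cb_def by auto
  qed
  have A: "\<forall>a\<in>N. fst (g2 a) \<in> C (fst a) \<and> 0 < snd (g2 a) \<and> snd (g2 a) \<le> snd (g a) \<and> cb (g2 a) \<subseteq> cb (g a)"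
  proof
    fix a assume a: "a \<in> N"
    have "fst (g2 a) \<in> C (fst a) \<and> 0 < snd (g2 a) \<and> snd (g2 a) \<le> snd (g1 a)"
      using g1 a pf ll \<open>l \<noteq> l'\<close> unfolding g2_def by auto
    then show "fst (g2 a) \<in> C (fst a) \<and> 0 < snd (g2 a) \<and> snd (g2 a) \<le> snd (g a) \<and> cb (g2 a) \<subseteq> cb (g a)"
      using g1 a sub[of a] by fastforce
  qed
  have B: "\<forall>(a,b)\<in>insert p PP. \<forall>x\<in>X \<inter> cb (g2 a). \<forall>y\<in>X \<inter> cb (g2 b). Qp f \<epsilon> k x y"
  proof (clarify)
    fix a b x y assume ab: "(a,b) \<in> insert p PP" and x: "x \<in> X" "x \<in> cb (g2 a)" and y: "y \<in> X" "y \<in> cb (g2 b)"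
    show "Qp f \<epsilon> k x y"
    proof (cases "(a,b) = p")
      case True
      then have "a = l" "b = l'" using p by auto
      then show ?thesis using pf(7) x y \<open>l \<noteq> l'\<close> unfolding g2_def cb_def by auto
    next
      case False
      then have "(a,b) \<in> PP" using ab by auto
      then show ?thesis using q1 x y sub[of a] sub[of b] by blast
    qed
  qed
  show ?case using A B by blast
qed


definition Good :: "nat \<Rightarrow> (nat \<times> bool list \<Rightarrow> 'a \<times> real) \<Rightarrow> bool" where
  "Good m g \<longleftrightarrow> (\<forall>l\<in>Lv m. fst (g l) \<in> C (fst l) \<and> 0 < snd (g l) \<and> snd (g l) < 1 / real (Suc m)) \<and>
     (\<forall>l\<in>Lv m. \<forall>l'\<in>Lv m. fst l \<noteq> fst l' \<longrightarrow>
        (\<forall>x\<in>C (fst l) \<inter> cb (g l). \<forall>y\<in>C (fst l') \<inter> cb (g l'). Qp f \<epsilon> m x y))"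

definition Next :: "nat \<Rightarrow> (nat \<times> bool list \<Rightarrow> 'a \<times> real) \<Rightarrow> (nat \<times> bool list \<Rightarrow> 'a \<times> real) \<Rightarrow> bool" where
  "Next m g g' \<longleftrightarrow> Good (Suc m) g' \<and>
     (\<forall>n s b. (n,s) \<in> Lv m \<longrightarrow> cb (g' (n, s@[b])) \<subseteq> cb (g (n,s))) \<and>
     (\<forall>n s. (n,s) \<in> Lv m \<longrightarrow> cb (g' (n, s@[True])) \<inter> cb (g' (n, s@[False])) = {})"

lemma C_ne: "C n \<noteq> {}"
  using Ccantor[of n] unfolding cantor_set_def by blast

lemma Lv_Suc_cases:
  assumes "(n,t) \<in> Lv (Suc m)"
  shows "(n = Suc m \<and> t = []) \<or> (n \<le> m \<and> t \<noteq> [] \<and> (n, butlast t) \<in> Lv m)"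
  using assms unfolding Lv_def by (cases "n \<le> m") auto

lemma Lv_child: "(n,s) \<in> Lv m \<Longrightarrow> (n, s@[b]) \<in> Lv (Suc m)"
  unfolding Lv_def by auto

lemma Good0: "\<exists>g. Good 0 g"
proof -
  obtain x where x: "x \<in> C 0" using C_ne by blast
  have "Good 0 (\<lambda>l. (x, 1/2))" using x unfolding Good_def Lv_def by auto
  then show ?thesis by blast
qed

lemma step:
  assumes G: "Good m g"
  shows "\<exists>g'. Next m g g'"
proof -
  have "\<forall>l\<in>Lv m. \<exists>a. a \<in> C (fst l) \<and> a \<noteq> fst (g l) \<and> dist a (fst (g l)) < snd (g l)/2"
  proof
    fix l assume "l \<in> Lv m"
    then have "fst (g l) \<in> C (fst l)" "snd (g l)/2 > 0" using G unfolding Good_def by auto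
    then show "\<exists>a. a \<in> C (fst l) \<and> a \<noteq> fst (g l) \<and> dist a (fst (g l)) < snd (g l)/2"
      using C_limpt unfolding islimpt_approachable by blast
  qed
  then obtain a where a: "\<And>l. l \<in> Lv m \<Longrightarrow> a l \<in> C (fst l) \<and> a l \<noteq> fst (g l) \<and> dist (a l) (fst (g l)) < snd (g l)/2"
    by metis
  define \<rho> where "\<rho> l = min (dist (a l) (fst (g l)) / 3) (min (snd (g l)/2) (1/(2*real (Suc (Suc m)))))" for l
  obtain pt where pt: "pt \<in> C (Suc m)" using C_ne by blast
  define h where "h = (\<lambda>(n,t). if n \<le> m \<and> t \<noteq> [] then
      (if last t then (fst (g (n, butlast t)), \<rho> (n, butlast t)) else (a (n, butlast t), \<rho> (n, butlast t)))
      else (pt, 1/(2*real (Suc (Suc m)))))"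
  have hchild: "h (n, s@[b]) = (if b then fst (g (n,s)) else a (n,s), \<rho> (n,s))" if "(n,s) \<in> Lv m" for n s b
    using that unfolding h_def Lv_def by auto
  have rho: "0 < \<rho> l" "\<rho> l \<le> dist (a l) (fst (g l)) / 3" "\<rho> l \<le> snd (g l)/2" "\<rho> l \<le> 1/(2*real (Suc (Suc m)))"
    if "l \<in> Lv m" for l
    using a[OF that] G that unfolding \<rho>_def Good_def by auto
  have small: "1/(2*real (Suc (Suc m))) < 1/real (Suc (Suc m))" by (simp add: divide_simps)
  have hN: "\<forall>l\<in>Lv (Suc m). fst (h l) \<in> C (fst l) \<and> 0 < snd (h l) \<and> snd (h l) < 1/real (Suc (Suc m))"
  proof
    fix l assume l: "l \<in> Lv (Suc m)"
    obtain n t where nt: "l = (n,t)" by (cases l) blast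
    show "fst (h l) \<in> C (fst l) \<and> 0 < snd (h l) \<and> snd (h l) < 1/real (Suc (Suc m))"
    proof (cases "n = Suc m \<and> t = []")
      case True
      then show ?thesis using pt small nt unfolding h_def by auto
    next
      case False
      then have t: "n \<le> m" "t \<noteq> []" "(n, butlast t) \<in> Lv m" using Lv_Suc_cases l nt by blast+
      have tt: "t = butlast t @ [last t]" using t(2) by simp
      have "h l = (if last t then fst (g (n, butlast t)) else a (n, butlast t), \<rho> (n, butlast t))"
        using hchild[OF t(3), of "last t"] nt tt by metis
      then show ?thesis using rho[OF t(3)] a[OF t(3)] G t(3) small nt unfolding Good_def by auto
    qed
  qed
  have hsub: "cb (h (n, s@[b])) \<subseteq> cb (g (n,s))" if "(n,s) \<in> Lv m" for n s b
  proof
    fix z assume z: "z \<in> cb (h (n, s@[b]))"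
    let ?c = "fst (g (n,s))" and ?r = "snd (g (n,s))"
    show "z \<in> cb (g (n,s))"
    proof (cases b)
      case True
      then have "dist ?c z \<le> \<rho> (n,s)" using z hchild[OF that] unfolding cb_def by auto
      then show ?thesis using rho[OF that] G that unfolding cb_def Good_def by auto
    next
      case False
      then have "dist (a (n,s)) z \<le> \<rho> (n,s)" using z hchild[OF that] unfolding cb_def by auto
      moreover have "dist ?c z \<le> dist ?c (a (n,s)) + dist (a (n,s)) z" by (rule dist_triangle)
      ultimately show ?thesis using rho[OF that] a[OF that] unfolding cb_def
        by (simp add: dist_commute)
    qed
  qed
  have hdisj: "cb (h (n, s@[True])) \<inter> cb (h (n, s@[False])) = {}" if ns: "(n,s) \<in> Lv m" for n s
  proof (rule ccontr)
    assume "\<not> ?thesis"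
    then obtain z where "dist (fst (g (n,s))) z \<le> \<rho> (n,s)" "dist (a (n,s)) z \<le> \<rho> (n,s)"
      using hchild[OF ns] unfolding cb_def by auto
    moreover have "dist (a (n,s)) (fst (g (n,s))) \<le> dist (a (n,s)) z + dist z (fst (g (n,s)))"
      by (rule dist_triangle)
    moreover have "dist (a (n,s)) (fst (g (n,s))) > 0" using a[OF ns] by simp
    ultimately show False using rho[OF ns] by (simp add: dist_commute)
  qed
  define PP where "PP = {(l,l'). l \<in> Lv (Suc m) \<and> l' \<in> Lv (Suc m) \<and> fst l \<noteq> fst l'}"
  have "finite PP"
    by (rule finite_subset[of _ "Lv (Suc m) \<times> Lv (Suc m)"]) (auto simp: PP_def finite_Lv)
  moreover have "PP \<subseteq> Lv (Suc m) \<times> Lv (Suc m)" "\<forall>(l,l')\<in>PP. fst l \<noteq> fst l'"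
    unfolding PP_def by auto
  moreover have "\<forall>l\<in>Lv (Suc m). fst (h l) \<in> C (fst l) \<and> snd (h l) > 0" using hN by blast
  ultimately obtain g' where
    g'1: "\<forall>l\<in>Lv (Suc m). fst (g' l) \<in> C (fst l) \<and> 0 < snd (g' l) \<and> snd (g' l) \<le> snd (h l) \<and> cb (g' l) \<subseteq> cb (h l)"
    and g'2: "\<forall>(l,l')\<in>PP. \<forall>x\<in>X \<inter> cb (g' l). \<forall>y\<in>X \<inter> cb (g' l'). Qp f \<epsilon> (Suc m) x y"
    using multi_fix[of PP "Lv (Suc m)" h "Suc m"] by blast
  have "Good (Suc m) g'"
    unfolding Good_def
  proof (intro conjI ballI impI)
    fix l assume l: "l \<in> Lv (Suc m)"
    then show "fst (g' l) \<in> C (fst l)" "0 < snd (g' l)" "snd (g' l) < 1 / real (Suc (Suc m))"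
      using g'1 hN by fastforce+
  next
    fix l l' x y assume "l \<in> Lv (Suc m)" "l' \<in> Lv (Suc m)" "fst l \<noteq> fst l'"
      "x \<in> C (fst l) \<inter> cb (g' l)" "y \<in> C (fst l') \<inter> cb (g' l')"
    then show "Qp f \<epsilon> (Suc m) x y" using g'2 CX unfolding PP_def by blast
  qed
  moreover have "cb (g' (n, s@[b])) \<subseteq> cb (g (n,s))" if "(n,s) \<in> Lv m" for n s b
    using g'1 Lv_child[OF that, of b] hsub[OF that, of b] by blast
  moreover have "cb (g' (n, s@[True])) \<inter> cb (g' (n, s@[False])) = {}" if "(n,s) \<in> Lv m" for n s
    using g'1 Lv_child[OF that] hdisj[OF that] by blast
  ultimately show ?thesis unfolding Next_def by blast
qed


primrec G :: "nat \<Rightarrow> (nat \<times> bool list \<Rightarrow> 'a \<times> real)" where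
  "G 0 = (SOME g. Good 0 g)"
| "G (Suc m) = (SOME g'. Next m (G m) g')"

lemma GoodG: "Good m (G m)"
proof (induction m)
  case 0 then show ?case using someI_ex[OF Good0] by simp
next
  case (Suc m)
  have "Next m (G m) (G (Suc m))" using someI_ex[OF step[OF Suc]] by simp
  then show ?case unfolding Next_def by blast
qed

lemma NextG: "Next m (G m) (G (Suc m))"
  using someI_ex[OF step[OF GoodG[of m]]] by simp

definition P :: "nat \<Rightarrow> bool list \<Rightarrow> 'a set" where
  "P n s = C n \<inter> cb (G (n + length s) (n, s))"

lemma Lv_self: "(n,s) \<in> Lv (n + length s)"
  unfolding Lv_def by simp

lemma P_snoc: "P n (s@[b]) = C n \<inter> cb (G (Suc (n + length s)) (n, s@[b]))"
  unfolding P_def by (simp del: G.simps)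

lemma P_child: "P n (s@[b]) \<subseteq> P n s"
proof -
  have "cb (G (Suc (n + length s)) (n, s@[b])) \<subseteq> cb (G (n + length s) (n,s))"
    using NextG[of "n + length s"] Lv_self[of n s] unfolding Next_def by blast
  then show ?thesis unfolding P_snoc by (auto simp: P_def)
qed

lemma P_disj: "P n (s@[True]) \<inter> P n (s@[False]) = {}"
proof -
  have "cb (G (Suc (n + length s)) (n, s@[True])) \<inter> cb (G (Suc (n + length s)) (n, s@[False])) = {}"
    using NextG[of "n + length s"] Lv_self[of n s] unfolding Next_def by blast
  then show ?thesis unfolding P_snoc by blast
qed

lemma P_prefix: "P n (s@t) \<subseteq> P n s"
proof (induction t rule: rev_induct)
  case Nil then show ?case by simp
next
  case (snoc x t)
  then show ?case using P_child[of n "s@t" x] by auto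
qed

lemma P_compact: "compact (P n s)"
  unfolding P_def cb_def
  using Ccantor[of n] unfolding cantor_set_def by (intro compact_Int_closed) auto

lemma P_ne: "P n s \<noteq> {}"
proof -
  have "fst (G (n + length s) (n,s)) \<in> C n" "0 < snd (G (n + length s) (n,s))"
    using GoodG[of "n + length s"] Lv_self[of n s] unfolding Good_def by auto
  then have "fst (G (n + length s) (n,s)) \<in> P n s" unfolding P_def cb_def by auto
  then show ?thesis by blast
qed

lemma P_sub: "P n s \<subseteq> C n" unfolding P_def by auto

lemma P_diam:
  assumes "x \<in> P n s" "y \<in> P n s"
  shows "dist x y < 2 / real (Suc (n + length s))"
proof -
  let ?p = "G (n + length s) (n,s)"
  have r: "snd ?p < 1 / real (Suc (n + length s))"
    using GoodG[of "n + length s"] Lv_self[of n s] unfolding Good_def by auto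
  have "dist (fst ?p) x \<le> snd ?p" "dist (fst ?p) y \<le> snd ?p" using assms unfolding P_def cb_def by auto
  moreover have "dist x y \<le> dist x (fst ?p) + dist (fst ?p) y" by (rule dist_triangle)
  ultimately show ?thesis using r by (simp add: dist_commute)
qed

lemma P_cross:
  assumes "n \<noteq> n'" "n + length s = m" "n' + length t = m" "x \<in> P n s" "y \<in> P n' t"
  shows "Qp f \<epsilon> m x y"
proof -
  have "(n,s) \<in> Lv m" using assms(2) Lv_self[of n s] by simp
  have "(n',t) \<in> Lv m" using assms(3) Lv_self[of n' t] by simp
  then show ?thesis using \<open>(n,s) \<in> Lv m\<close> GoodG[of m] assms unfolding Good_def P_def by fastforce
qed

definition D :: "nat \<Rightarrow> 'a set" where
  "D n = (\<Inter>l. \<Union>s\<in>{s. length s = l}. P n s)"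

lemma D_sub_P0: "D n \<subseteq> P n []"
  unfolding D_def by auto

lemma D_sub: "D n \<subseteq> C n" using D_sub_P0 P_sub by blast

lemma D_memE:
  assumes "x \<in> D n" obtains s where "length s = l" "x \<in> P n s"
  using assms unfolding D_def by blast

lemma D_point: "\<exists>z\<in>D n. z \<in> P n s"
proof -
  define F where "F k = P n (s @ replicate k False)" for k
  have "\<exists>z. \<forall>k. z \<in> F k"
  proof (rule nested_compact)
    show "compact (F k)" "F k \<noteq> {}" for k unfolding F_def using P_compact P_ne by auto
    fix i k :: nat assume "i \<le> k"
    then have "s @ replicate k False = (s @ replicate i False) @ replicate (k - i) False"
      by (metis append.assoc le_add_diff_inverse replicate_add)
    then show "F k \<subseteq> F i" unfolding F_def by (metis P_prefix)
  qed
  then obtain z where z: "\<And>k. z \<in> F k" by blast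
  have "z \<in> D n" unfolding D_def
  proof (intro InterI, clarify)
    fix l
    show "z \<in> (\<Union>s\<in>{s. length s = l}. P n s)"
    proof (cases "length s \<le> l")
      case True
      then have "length (s @ replicate (l - length s) False) = l" by simp
      then show ?thesis using z[of "l - length s"] unfolding F_def by blast
    next
      case False
      have "z \<in> P n s" using z[of 0] unfolding F_def by simp
      also have "P n s = P n (take l s @ drop l s)" by simp
      also have "\<dots> \<subseteq> P n (take l s)" by (rule P_prefix)
      finally show ?thesis using False by (intro UN_I[of "take l s"]) auto
    qed
  qed
  then show ?thesis using z[of 0] unfolding F_def by auto
qed

lemma D_ne: "D n \<noteq> {}" using D_point by blast

lemma D_compact: "compact (D n)"
proof -
  have "D n = P n [] \<inter> (\<Inter>l. \<Union>s\<in>{s. length s = l}. P n s)" using D_sub_P0 unfolding D_def by blast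
  moreover have "closed (\<Inter>l. \<Union>s\<in>{s::bool list. length s = l}. P n s)"
  proof (intro closed_INT closed_UN ballI)
    show "finite {s::bool list. length s = l}" for l
      using finite_lists_length_eq[of "UNIV::bool set" l] by simp
    show "closed (P n s)" for s using P_compact compact_imp_closed by blast
  qed
  ultimately show ?thesis using P_compact by (metis compact_Int_closed)
qed

lemma D_perfect: "x \<in> D n \<Longrightarrow> x islimpt D n"
proof (unfold islimpt_approachable, intro allI impI)
  fix e :: real assume x: "x \<in> D n" and e: "0 < e"
  obtain l :: nat where l: "2 / e < real l" using reals_Archimedean2 by blast
  then have le: "2 / real (Suc (n + l)) < e"
  proof -
    have "2 < real l * e" using l e by (simp add: pos_divide_less_eq)
    moreover have "real l * e \<le> real (Suc (n + l)) * e" using e by (intro mult_right_mono) auto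
    ultimately have "2 < real (Suc (n + l)) * e" by linarith
    then show ?thesis by (simp add: pos_divide_less_eq mult.commute del: of_nat_Suc)
  qed
  obtain s where s: "length s = l" "x \<in> P n s" using D_memE[OF x] by blast
  obtain y0 where y0: "y0 \<in> D n" "y0 \<in> P n (s@[True])" using D_point by blast
  obtain y1 where y1: "y1 \<in> D n" "y1 \<in> P n (s@[False])" using D_point by blast
  have "y0 \<noteq> y1" using P_disj y0 y1 by blast
  then obtain y where y: "y \<in> D n" "y \<in> P n s" "y \<noteq> x"
    using y0 y1 P_child by blast
  have "dist y x < e" using P_diam[OF y(2) s(2)] s(1) le by simp
  then show "\<exists>x'\<in>D n. x' \<noteq> x \<and> dist x' x < e" using y by blast
qed

lemma D_cross:
  assumes "i \<noteq> j" "x \<in> D i" "y \<in> D j"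
  shows "Qp f \<epsilon> k x y"
proof -
  define m where "m = i + j + k"
  obtain s where s: "length s = m - i" "x \<in> P i s" using D_memE[OF assms(2)] by blast
  obtain t where t: "length t = m - j" "y \<in> P j t" using D_memE[OF assms(3)] by blast
  have "i + length s = m" "j + length t = m" using s(1) t(1) unfolding m_def by auto
  then have "Qp f \<epsilon> m x y" using P_cross[OF assms(1) _ _ s(2) t(2)] by blast
  then show ?thesis using Qp_mono[of f \<epsilon> m x y k] unfolding m_def by simp
qed

lemma D_cantor: "cantor_set (D n)"
proof -
  have "totally_disconnected (D n)"
    using Ccantor[of n] D_sub[of n] unfolding cantor_set_def totally_disconnected_def by blast
  then show ?thesis unfolding cantor_set_def using D_ne D_compact D_perfect by blast
qed

end

lemma frequent_not_Asy:
  assumes "\<And>k. \<exists>n\<ge>k. e < dist ((f^^n) x) ((f^^n) y)" "e > 0"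
  shows "(x,y) \<notin> Asy f"
proof
  assume "(x,y) \<in> Asy f"
  then have "(\<lambda>n. dist ((f ^^ n) x) ((f ^^ n) y)) \<longlonglongrightarrow> 0" unfolding Asy_def by simp
  from order_tendstoD(2)[OF this assms(2)] obtain N where "\<And>n. n \<ge> N \<Longrightarrow> dist ((f ^^ n) x) ((f ^^ n) y) < e"
    by (auto simp: eventually_sequentially)
  with assms(1)[of N] show False by force
qed

theorem proposition3p13:
  fixes X :: "'a::metric_space set" and f :: "'a \<Rightarrow> 'a" and S :: "'a set" and \<epsilon> :: real
  assumes "compact X" and "continuous_on X f" and "f ` X \<subseteq> X"
    and "\<epsilon> > 0"
    and "S \<subseteq> X" and "X \<subseteq> closure S" and "mycielski S"
    and "S \<times> S \<subseteq> SProx f"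
    and "\<And>W. openin (top_of_set X) W \<Longrightarrow> W \<noteq> {} \<Longrightarrow>
           \<exists>C. C \<subseteq> S \<inter> W \<and> cantor_set C \<and> syndetically_scrambled f (3 * \<epsilon>) C"
  shows "\<exists>T. T \<subseteq> S \<and> X \<subseteq> closure T \<and> mycielski T \<and> syndetically_scrambled f \<epsilon> T"
proof -
  have "S \<noteq> {}" using assms(7) unfolding mycielski_def cantor_set_def by blast
  then have Xne: "X \<noteq> {}" using assms(5) by blast
  have "\<forall>m::nat. \<exists>A. A \<subseteq> X \<and> finite A \<and> X \<subseteq> (\<Union>a\<in>A. ball a (1 / real (Suc m)))"
  proof
    fix m :: nat
    have "X \<subseteq> (\<Union>a\<in>X. ball a (1 / real (Suc m)))" by (auto intro!: bexI)
    from compactE_image[OF assms(1) _ this] obtain A where "A \<subseteq> X" "finite A" "X \<subseteq> (\<Union>a\<in>A. ball a (1 / real (Suc m)))"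
      by blast
    then show "\<exists>A. A \<subseteq> X \<and> finite A \<and> X \<subseteq> (\<Union>a\<in>A. ball a (1 / real (Suc m)))" by blast
  qed
  then obtain Af where Af: "\<And>m. Af m \<subseteq> X" "\<And>m. finite (Af m)" "\<And>m. X \<subseteq> (\<Union>a\<in>Af m. ball a (1 / real (Suc m)))"
    by metis
  define B where "B = (\<Union>m. Af m \<times> {m})"
  have cB: "countable B" unfolding B_def
    using Af(2) by (intro countable_UN) (auto intro: countable_finite)
  obtain x0 where "x0 \<in> X" using Xne by blast
  then obtain a0 where "a0 \<in> Af 0" using Af(3)[of 0] by blast
  then have Bne: "B \<noteq> {}" unfolding B_def by blast
  define W where "W n = X \<inter> ball (fst (from_nat_into B n)) (1 / real (Suc (snd (from_nat_into B n))))" for n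
  have "fst (from_nat_into B n) \<in> X" for n
    using from_nat_into[OF Bne, of n] Af(1) unfolding B_def by fastforce
  then have Wok: "openin (top_of_set X) (W n)" "W n \<noteq> {}" for n
  proof -
    show "openin (top_of_set X) (W n)" unfolding W_def by (auto intro!: openin_open_Int)
    have "fst (from_nat_into B n) \<in> W n" using \<open>\<And>n. fst (from_nat_into B n) \<in> X\<close>[of n] unfolding W_def by simp
    then show "W n \<noteq> {}" by blast
  qed
  have "\<forall>n. \<exists>C. C \<subseteq> S \<inter> W n \<and> cantor_set C \<and> syndetically_scrambled f (3 * \<epsilon>) C"
  proof
    fix n show "\<exists>C. C \<subseteq> S \<inter> W n \<and> cantor_set C \<and> syndetically_scrambled f (3 * \<epsilon>) C"
      by (rule assms(9)[OF Wok(1) Wok(2)])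
  qed
  from choice[OF this] obtain Cf where Cf0: "\<forall>n. Cf n \<subseteq> S \<inter> W n \<and> cantor_set (Cf n) \<and> syndetically_scrambled f (3 * \<epsilon>) (Cf n)"
    by blast
  have Cf: "\<And>n. Cf n \<subseteq> S \<inter> W n" "\<And>n. cantor_set (Cf n)"
     "\<And>n. syndetically_scrambled f (3 * \<epsilon>) (Cf n)" using Cf0 by auto
  interpret constr X f \<epsilon> Cf
  proof
    show "f ` X \<subseteq> X" "continuous_on X f" "\<epsilon> > 0" using assms by auto
    show "Cf n \<subseteq> X" for n using Cf(1) assms(5) by blast
    show "cantor_set (Cf n)" for n by (rule Cf(2))
    show "syndetically_scrambled f (3*\<epsilon>) (Cf n)" for n by (rule Cf(3))
  qed
  define T where "T = (\<Union>n. D n)"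
  have TS: "T \<subseteq> S" unfolding T_def using D_sub Cf(1) by blast
  have dense: "X \<subseteq> closure T"
  proof
    fix x assume x: "x \<in> X"
    show "x \<in> closure T" unfolding closure_approachable
    proof (intro allI impI)
      fix e :: real assume e: "e > 0"
      obtain n0 :: nat where n0: "n0 > 0" "inverse (real n0) < e/2"
        using ex_inverse_of_nat_less[of "e/2"] e by auto
      define m where "m = n0 - 1"
      have "Suc m = n0" using n0(1) unfolding m_def by simp
      then have m: "inverse (real (Suc m)) < e/2" using n0(2) by simp
      obtain a where a: "a \<in> Af m" "dist a x < 1 / real (Suc m)" using Af(3)[of m] x by auto
      have "(a,m) \<in> B" unfolding B_def using a by blast
      then obtain n where n: "from_nat_into B n = (a,m)" using from_nat_into_surj[OF cB] by metis
      obtain t where t: "t \<in> D n" using D_ne by blast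
      then have "t \<in> W n" using D_sub Cf(1) by blast
      then have "dist a t < 1 / real (Suc m)" unfolding W_def n by simp
      then have "dist t x < e" using a(2) m dist_triangle[of t x a]
        by (simp add: dist_commute inverse_eq_divide)
      then show "\<exists>y\<in>T. dist y x < e" using t unfolding T_def by blast
    qed
  qed
  have myc: "mycielski T" unfolding mycielski_def T_def using D_cantor by blast
  have scr: "syndetically_scrambled f \<epsilon> T"
    unfolding syndetically_scrambled_def
  proof (rule conjI)
    obtain x where x: "x \<in> D 0" using D_ne by blast
    then obtain y where "y \<in> D 0" "y \<noteq> x" using D_perfect[OF x] unfolding islimpt_approachable
      by (meson zero_less_one)
    then show "\<exists>x\<in>T. \<exists>y\<in>T. x \<noteq> y" using x unfolding T_def by blast
  next
    show "\<forall>x\<in>T. \<forall>y\<in>T. x \<noteq> y \<longrightarrow> (x, y) \<in> SProx f - Asy f \<and> ereal \<epsilon> \<le> limsup (\<lambda>n. ereal (dist ((f ^^ n) x) ((f ^^ n) y)))"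
    proof (intro ballI impI)
    fix x y assume xy: "x \<in> T" "y \<in> T" "x \<noteq> y"
    have sp: "(x,y) \<in> SProx f" using assms(8) xy TS by blast
    show "(x, y) \<in> SProx f - Asy f \<and> ereal \<epsilon> \<le> limsup (\<lambda>n. ereal (dist ((f ^^ n) x) ((f ^^ n) y)))"
    proof (cases "\<exists>n. x \<in> D n \<and> y \<in> D n")
      case True
      then obtain n where "x \<in> Cf n" "y \<in> Cf n" using D_sub by blast
      then have "(x, y) \<in> SProx f - Asy f" "ereal (3*\<epsilon>) \<le> limsup (\<lambda>n. ereal (dist ((f ^^ n) x) ((f ^^ n) y)))"
        using Cf(3)[of n] xy(3) unfolding syndetically_scrambled_def by blast+
      moreover have "ereal \<epsilon> \<le> ereal (3*\<epsilon>)" using assms(4) by simp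
      ultimately show ?thesis by (meson order_trans)
    next
      case False
      obtain i j where ij: "x \<in> D i" "y \<in> D j" using xy unfolding T_def by blast
      with False have "i \<noteq> j" by blast
      have fr: "\<exists>n\<ge>k. \<epsilon> < dist ((f^^n) x) ((f^^n) y)" for k
        using D_cross[OF \<open>i \<noteq> j\<close> ij, of k] unfolding Qp_def by blast
      show ?thesis using sp frequent_not_Asy[OF fr assms(4)] limsup_ge_of_frequent[OF fr] by blast
    qed
    qed
  qed
  show ?thesis using TS dense myc scr by blast
qed

end
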